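(* Let $Z_1,\ldots,Z_{n+1}$ be i.i.d. from an arbitrary distribution $\mathcal P$, $V$ a data-dependent score function, $\alpha\in(0,1)$. Fix a finite grid $\mathcal G\subset[0,1]$ containing $0$ and $1$, and for $a\in\mathcal G$ let $S(a)=\frac{1}{n+1}\sum_{i=1}^{n+1}\mathbb 1\{V^{Z_{n+1}}_i\le Q(a;\hat{\mathcal F}^{Z_{n+1}}_i)\}$. Let $\tilde\alpha_1=\min\{a\in\mathcal G:S(a)\ge\alpha\}$, $\tilde\alpha_2=\max\{a\in\mathcal G:S(a)<\alpha\}$, $\alpha_1=S(\tilde\alpha_1)$, $\alpha_2=S(\tilde\alpha_2)$, and let $\tilde\alpha=\tilde\alpha_1$ with probability $\frac{\alpha-\alpha_2}{\alpha_1-\alpha_2}$ and $\tilde\alpha=\tilde\alpha_2$ with probability $\frac{\alpha_1-\alpha}{\alpha_1-\alpha_2}$, using randomization independent of the data. Then $\mathbb P\{V^{Z_{n+1}}_{n+1}\le Q(\tilde\alpha;\hat{\mathcal F}^{Z_{n+1}})\}=\alpha$.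
   Context: Data: $Z_i=(X_i,Y_i)\in\mathbb R^p\times\mathbb R$, $i=1,\ldots,n+1$; $X=\{X_1,\ldots,X_{n+1}\}$ (unordered). A localizer is a function $H(x_1,x_2,X)\in[0,1]$ of $x_1,x_2\in\mathbb R^p$ and of the unordered set $X$, satisfying $H(x,x,X)=1$ for all $x$; $H_{i,j}=H(X_i,X_j,X)$, $p^H_{i,j}=H_{i,j}/\sum_{k=1}^{n+1}H_{i,k}$. A data-dependent score function is a measurable map $V(z,\mathcal Z)\in[0,\infty)$, where $z\in\mathbb R^p\times\mathbb R$ and $\mathcal Z$ is an unordered multiset of $n+1$ points. $V^{Z_{n+1}}_i=V(Z_i,\{Z_1,\ldots,Z_{n+1}\})$, $i=1,\ldots,n+1$; $\hat{\mathcal F}^{Z_{n+1}}_i=\sum_{j=1}^{n+1}p^H_{i,j}\delta_{V^{Z_{n+1}}_j}$ and $\hat{\mathcal F}^{Z_{n+1}}=\sum_{j=1}^np^H_{n+1,j}\delta_{V^{Z_{n+1}}_j}+p^H_{n+1,n+1}\delta_\infty$; $\delta_v$ is the point mass at $v$. For a probability distribution $\mathcal F$ on $\mathbb R\cup\{\infty\}$ and $a\in[0,1]$, $Q(a;\mathcal F)=\inf\{t:\mathbb P_{T\sim\mathcal F}(T\le t)\ge a\}$ (with $Q(0;\mathcal F)=-\infty$). *)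

theory Defs
  imports "HOL-Probability.Probability" "HOL-Library.Multiset"
begin

definition Xms :: "nat \<Rightarrow> (nat \<Rightarrow> 'x \<times> real) \<Rightarrow> 'x multiset" where
  "Xms n z = image_mset (\<lambda>i. fst (z i)) (mset_set {1..n+1})"

definition Zms :: "nat \<Rightarrow> (nat \<Rightarrow> 'x \<times> real) \<Rightarrow> ('x \<times> real) multiset" where
  "Zms n z = image_mset z (mset_set {1..n+1})"

definition Hm :: "('x \<Rightarrow> 'x \<Rightarrow> 'x multiset \<Rightarrow> real) \<Rightarrow> nat \<Rightarrow> (nat \<Rightarrow> 'x \<times> real) \<Rightarrow> nat \<Rightarrow> nat \<Rightarrow> real" where
  "Hm H n z i j = H (fst (z i)) (fst (z j)) (Xms n z)"

definition pH :: "('x \<Rightarrow> 'x \<Rightarrow> 'x multiset \<Rightarrow> real) \<Rightarrow> nat \<Rightarrow> (nat \<Rightarrow> 'x \<times> real) \<Rightarrow> nat \<Rightarrow> nat \<Rightarrow> real" where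
  "pH H n z i j = Hm H n z i j / (\<Sum>k\<in>{1..n+1}. Hm H n z i k)"

definition Vs :: "('x \<times> real \<Rightarrow> ('x \<times> real) multiset \<Rightarrow> real) \<Rightarrow> nat \<Rightarrow> (nat \<Rightarrow> 'x \<times> real) \<Rightarrow> nat \<Rightarrow> real" where
  "Vs V n z i = V (z i) (Zms n z)"

text \<open>Quantile Q(a; F) of the discrete distribution F = sum_{j in I} w_j delta_{v_j} on R \<union> {\<infinity>}:
  Q(a;F) = inf {t : P_{T~F}(T \<le> t) \<ge> a}; for a = 0 this is -\<infinity>.\<close>
definition Qd :: "real \<Rightarrow> ('i \<Rightarrow> real) \<Rightarrow> ('i \<Rightarrow> ereal) \<Rightarrow> 'i set \<Rightarrow> ereal" where
  "Qd a w v I = Inf {t. a \<le> (\<Sum>j\<in>{j\<in>I. v j \<le> t}. w j)}"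

definition QFi where
  "QFi H V n z i a = Qd a (pH H n z i) (\<lambda>j. ereal (Vs V n z j)) {1..n+1}"

definition QF where
  "QF H V n z a = Qd a (pH H n z (n+1))
      (\<lambda>j. if j = n+1 then \<infinity> else ereal (Vs V n z j)) {1..n+1}"

definition Sfun where
  "Sfun H V n z a = real (card {i\<in>{1..n+1}. ereal (Vs V n z i) \<le> QFi H V n z i a}) / real (n+1)"

definition alpha1t where
  "alpha1t H V n G \<alpha> z = Min {a\<in>G. Sfun H V n z a \<ge> \<alpha>}"

definition alpha2t where
  "alpha2t H V n G \<alpha> z = Max {a\<in>G. Sfun H V n z a < \<alpha>}"

definition alpha1 where
  "alpha1 H V n G \<alpha> z = Sfun H V n z (alpha1t H V n G \<alpha> z)"

definition alpha2 where
  "alpha2 H V n G \<alpha> z = Sfun H V n z (alpha2t H V n G \<alpha> z)"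

text \<open>Randomized level: with u uniform on [0,1] independent of the data, pick
  alpha1t with probability (\<alpha> - alpha2)/(alpha1 - alpha2), else alpha2t.\<close>
definition alphat where
  "alphat H V n G \<alpha> z u =
     (if u < (\<alpha> - alpha2 H V n G \<alpha> z) / (alpha1 H V n G \<alpha> z - alpha2 H V n G \<alpha> z)
      then alpha1t H V n G \<alpha> z else alpha2t H V n G \<alpha> z)"

end

theory Submission
  imports Defs
begin
definition Tf where
  "Tf H V n z i = (\<Sum>j\<in>{1..n+1}. if Vs V n z j < Vs V n z i then pH H n z i j else 0)"

lemma Qd_char:
  fixes w :: "'i \<Rightarrow> real"
  assumes I: "finite I" and w: "\<And>j. j \<in> I \<Longrightarrow> 0 \<le> w j"
  shows "ereal x \<le> Qd a w v I \<longleftrightarrow> (\<Sum>j\<in>{j\<in>I. v j < ereal x}. w j) < a"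
proof
  assume h: "ereal x \<le> Qd a w v I"
  show "(\<Sum>j\<in>{j\<in>I. v j < ereal x}. w j) < a"
  proof (rule ccontr)
    assume "\<not> ?thesis"
    hence ge: "a \<le> (\<Sum>j\<in>{j\<in>I. v j < ereal x}. w j)" by simp
    define t where "t = Max (insert (-\<infinity>) (v ` {j\<in>I. v j < ereal x}))"
    have fin: "finite (insert (-\<infinity>) (v ` {j\<in>I. v j < ereal x}))" using I by auto
    have tlt: "t < ereal x" unfolding t_def using fin by (subst Max_less_iff) auto
    have eq: "{j\<in>I. v j \<le> t} = {j\<in>I. v j < ereal x}"
    proof safe
      fix j assume "j \<in> I" "v j \<le> t" thus "v j < ereal x" using tlt by simp
    next
      fix j assume "j \<in> I" "v j < ereal x" thus "v j \<le> t" unfolding t_def using fin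
        by (intro Max_ge) auto
    qed
    have "Qd a w v I \<le> t" unfolding Qd_def by (rule Inf_lower) (use ge eq in simp)
    thus False using h tlt by simp
  qed
next
  assume h: "(\<Sum>j\<in>{j\<in>I. v j < ereal x}. w j) < a"
  show "ereal x \<le> Qd a w v I" unfolding Qd_def
  proof (rule Inf_greatest)
    fix t assume "t \<in> {t. a \<le> (\<Sum>j\<in>{j\<in>I. v j \<le> t}. w j)}"
    hence t: "a \<le> (\<Sum>j\<in>{j\<in>I. v j \<le> t}. w j)" by simp
    show "ereal x \<le> t"
    proof (rule ccontr)
      assume "\<not> ?thesis" hence "t < ereal x" by simp
      hence "{j\<in>I. v j \<le> t} \<subseteq> {j\<in>I. v j < ereal x}" by auto
      hence "(\<Sum>j\<in>{j\<in>I. v j \<le> t}. w j) \<le> (\<Sum>j\<in>{j\<in>I. v j < ereal x}. w j)"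
        using I w by (intro sum_mono2) auto
      thus False using t h by simp
    qed
  qed
qed

lemma pH_nonneg:
  assumes "\<And>x y X. 0 \<le> H x y X"
  shows "0 \<le> pH H n z i j"
  unfolding pH_def Hm_def using assms by (intro divide_nonneg_nonneg sum_nonneg) auto

lemma QFi_char:
  assumes "\<And>x y X. 0 \<le> H x y X"
  shows "ereal (Vs V n z i) \<le> QFi H V n z i a \<longleftrightarrow> Tf H V n z i < a"
proof -
  have "ereal (Vs V n z i) \<le> QFi H V n z i a \<longleftrightarrow>
     (\<Sum>j\<in>{j\<in>{1..n+1}. ereal (Vs V n z j) < ereal (Vs V n z i)}. pH H n z i j) < a"
    unfolding QFi_def using pH_nonneg[OF assms] by (intro Qd_char) auto
  also have "(\<Sum>j\<in>{j\<in>{1..n+1}. ereal (Vs V n z j) < ereal (Vs V n z i)}. pH H n z i j) = Tf H V n z i"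
    unfolding Tf_def by (subst sum.inter_filter) auto
  finally show ?thesis .
qed

lemma QF_char:
  assumes "\<And>x y X. 0 \<le> H x y X"
  shows "ereal (Vs V n z (n+1)) \<le> QF H V n z a \<longleftrightarrow> Tf H V n z (n+1) < a"
proof -
  have "ereal (Vs V n z (n+1)) \<le> QF H V n z a \<longleftrightarrow>
     (\<Sum>j\<in>{j\<in>{1..n+1}. (if j = n+1 then \<infinity> else ereal (Vs V n z j)) < ereal (Vs V n z (n+1))}. pH H n z (n+1) j) < a"
    unfolding QF_def using pH_nonneg[OF assms] by (intro Qd_char) auto
  also have "{j\<in>{1..n+1}. (if j = n+1 then \<infinity> else ereal (Vs V n z j)) < ereal (Vs V n z (n+1))}
      = {j\<in>{1..n+1}. Vs V n z j < Vs V n z (n+1)}" by auto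
  also have "(\<Sum>j\<in>{j\<in>{1..n+1}. Vs V n z j < Vs V n z (n+1)}. pH H n z (n+1) j) = Tf H V n z (n+1)"
    unfolding Tf_def by (subst sum.inter_filter) auto
  finally show ?thesis .
qed

lemma Sfun_eq:
  assumes "\<And>x y X. 0 \<le> H x y X"
  shows "Sfun H V n z a = (\<Sum>i\<in>{1..n+1}. if Tf H V n z i < a then 1 else 0) / real (n+1)"
proof -
  have "card {i\<in>{1..n+1}. ereal (Vs V n z i) \<le> QFi H V n z i a} = card {i\<in>{1..n+1}. Tf H V n z i < a}"
    using QFi_char[of H, OF assms] by simp
  also have "real \<dots> = (\<Sum>i\<in>{1..n+1}. if Tf H V n z i < a then 1 else 0)"
    by (subst sum.If_cases) (auto intro!: arg_cong[where f=card])
  finally show ?thesis unfolding Sfun_def by simp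
qed

lemma Tf_nonneg:
  assumes "\<And>x y X. 0 \<le> H x y X"
  shows "0 \<le> Tf H V n z i"
  unfolding Tf_def using pH_nonneg[OF assms] by (intro sum_nonneg) auto

lemma Tf_less1:
  assumes "\<And>x y X. 0 \<le> H x y X" "\<And>x X. H x x X = 1" and i: "i \<in> {1..n+1}"
  shows "Tf H V n z i < 1"
proof -
  define D where "D = (\<Sum>k\<in>{1..n+1}. Hm H n z i k)"
  have D: "D = Hm H n z i i + (\<Sum>k\<in>{1..n+1}-{i}. Hm H n z i k)"
    unfolding D_def using i by (subst sum.remove) auto
  have hii: "Hm H n z i i = 1" unfolding Hm_def using assms(2) by simp
  have rest: "0 \<le> (\<Sum>k\<in>{1..n+1}-{i}. Hm H n z i k)" unfolding Hm_def using assms(1)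
    by (intro sum_nonneg) auto
  have Dpos: "D \<ge> 1" using D hii rest by simp
  have "Tf H V n z i = (\<Sum>j\<in>{1..n+1}. if Vs V n z j < Vs V n z i then Hm H n z i j else 0) / D"
    unfolding Tf_def pH_def D_def[symmetric] sum_divide_distrib by (intro sum.cong) auto
  also have "(\<Sum>j\<in>{1..n+1}. if Vs V n z j < Vs V n z i then Hm H n z i j else 0)
     \<le> (\<Sum>j\<in>{1..n+1}. if j = i then 0 else Hm H n z i j)"
    unfolding Hm_def using assms(1) by (intro sum_mono) auto
  also have "(\<Sum>j\<in>{1..n+1}. if j = i then 0 else Hm H n z i j) = (\<Sum>k\<in>{1..n+1}-{i}. Hm H n z i k)"
    by (subst sum.If_cases) (auto intro!: sum.cong)
  finally have "Tf H V n z i \<le> (D - 1) / D" using D hii Dpos by (simp add: divide_right_mono)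
  also have "\<dots> < 1" using Dpos by simp
  finally show ?thesis .
qed

lemma Zms_cong: "(\<And>j. j \<in> {1..n+1} \<Longrightarrow> z j = z' j) \<Longrightarrow> Zms n z = Zms n z'"
  unfolding Zms_def by (intro image_mset_cong) auto
lemma Xms_cong: "(\<And>j. j \<in> {1..n+1} \<Longrightarrow> z j = z' j) \<Longrightarrow> Xms n z = Xms n z'"
  unfolding Xms_def by (intro image_mset_cong) auto

lemma Tf_cong:
  assumes "\<And>j. j \<in> {1..n+1} \<Longrightarrow> z j = z' j" "i \<in> {1..n+1}"
  shows "Tf H V n z i = Tf H V n z' i"
  unfolding Tf_def pH_def Hm_def Vs_def using assms Zms_cong[of n z z'] Xms_cong[of n z z']
  by (intro sum.cong) auto

lemma Sfun_cong:
  assumes "\<And>x y X. 0 \<le> H x y X" "\<And>j. j \<in> {1..n+1} \<Longrightarrow> z j = z' j"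
  shows "Sfun H V n z = Sfun H V n z'"
  unfolding fun_eq_iff Sfun_eq[of H, OF assms(1)] using Tf_cong[of n z z', OF assms(2)] by simp

lemma Zms_perm:
  assumes "bij_betw \<sigma> {1..n+1} {1..n+1}"
  shows "Zms n (\<lambda>j. z (\<sigma> j)) = Zms n z"
proof -
  have "Zms n (\<lambda>j. z (\<sigma> j)) = image_mset z (image_mset \<sigma> (mset_set {1..n+1}))"
    unfolding Zms_def by (simp add: multiset.map_comp o_def)
  also have "image_mset \<sigma> (mset_set {1..n+1}) = mset_set {1..n+1}"
    using assms by (simp add: image_mset_mset_set bij_betw_def)
  finally show ?thesis unfolding Zms_def .
qed

lemma Xms_perm:
  assumes "bij_betw \<sigma> {1..n+1} {1..n+1}"
  shows "Xms n (\<lambda>j. z (\<sigma> j)) = Xms n z"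
proof -
  have "Xms n (\<lambda>j. z (\<sigma> j)) = image_mset (\<lambda>i. fst (z i)) (image_mset \<sigma> (mset_set {1..n+1}))"
    unfolding Xms_def by (simp add: multiset.map_comp o_def)
  also have "image_mset \<sigma> (mset_set {1..n+1}) = mset_set {1..n+1}"
    using assms by (simp add: image_mset_mset_set bij_betw_def)
  finally show ?thesis unfolding Xms_def .
qed

lemma Tf_perm:
  assumes b: "bij_betw \<sigma> {1..n+1} {1..n+1}" and i: "i \<in> {1..n+1}"
  shows "Tf H V n (\<lambda>j. z (\<sigma> j)) i = Tf H V n z (\<sigma> i)"
proof -
  have Vs: "Vs V n (\<lambda>j. z (\<sigma> j)) j = Vs V n z (\<sigma> j)" for j
    unfolding Vs_def using Zms_perm[OF b, of z] by simp
  have Hm: "Hm H n (\<lambda>j. z (\<sigma> j)) j k = Hm H n z (\<sigma> j) (\<sigma> k)" for j k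
    unfolding Hm_def using Xms_perm[OF b, of z] by simp
  have den: "(\<Sum>k\<in>{1..n+1}. Hm H n z (\<sigma> i) (\<sigma> k)) = (\<Sum>k\<in>{1..n+1}. Hm H n z (\<sigma> i) k)"
    using sum.reindex_bij_betw[OF b, of "\<lambda>k. Hm H n z (\<sigma> i) k"] by simp
  have pH: "pH H n (\<lambda>j. z (\<sigma> j)) i j = pH H n z (\<sigma> i) (\<sigma> j)" for j
    unfolding pH_def Hm den ..
  have "Tf H V n (\<lambda>j. z (\<sigma> j)) i = (\<Sum>j\<in>{1..n+1}. if Vs V n z (\<sigma> j) < Vs V n z (\<sigma> i) then pH H n z (\<sigma> i) (\<sigma> j) else 0)"
    unfolding Tf_def Vs pH ..
  also have "\<dots> = Tf H V n z (\<sigma> i)"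
    unfolding Tf_def using sum.reindex_bij_betw[OF b, of "\<lambda>j. if Vs V n z j < Vs V n z (\<sigma> i) then pH H n z (\<sigma> i) j else 0"]
    by simp
  finally show ?thesis .
qed

lemma Sfun_perm:
  assumes "\<And>x y X. 0 \<le> H x y X" and b: "bij_betw \<sigma> {1..n+1} {1..n+1}"
  shows "Sfun H V n (\<lambda>j. z (\<sigma> j)) = Sfun H V n z"
proof
  fix a
  have "(\<Sum>i\<in>{1..n+1}. if Tf H V n (\<lambda>j. z (\<sigma> j)) i < a then 1 else 0)
      = (\<Sum>i\<in>{1..n+1}. if Tf H V n z (\<sigma> i) < a then 1 else (0::real))"
    using Tf_perm[OF b, where H=H and V=V and z=z] by (intro sum.cong) auto
  also have "\<dots> = (\<Sum>i\<in>{1..n+1}. if Tf H V n z i < a then 1 else 0)"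
    using sum.reindex_bij_betw[OF b, of "\<lambda>i. if Tf H V n z i < a then 1 else (0::real)"] by simp
  finally show "Sfun H V n (\<lambda>j. z (\<sigma> j)) a = Sfun H V n z a"
    unfolding Sfun_eq[of H, OF assms(1)] by simp
qed

context
  fixes H :: "'x \<Rightarrow> 'x \<Rightarrow> 'x multiset \<Rightarrow> real" and V :: "'x \<times> real \<Rightarrow> ('x \<times> real) multiset \<Rightarrow> real"
    and n :: nat and G :: "real set" and \<alpha> :: real
  assumes Hnn: "\<And>x y X. 0 \<le> H x y X" and Hd: "\<And>x X. H x x X = 1"
    and al: "0 < \<alpha>" "\<alpha> < 1"
    and G: "finite G" "G \<subseteq> {0..1}" "0 \<in> G" "1 \<in> G"
begin

lemma Sfun_1: "Sfun H V n z 1 = 1"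
  unfolding Sfun_eq[of H, OF Hnn] using Tf_less1[of H, OF Hnn Hd] by simp

lemma Sfun_0: "Sfun H V n z 0 = 0"
  unfolding Sfun_eq[of H, OF Hnn] using Tf_nonneg[of H, OF Hnn] by (simp add: not_less sum.neutral del: One_nat_def)

lemma Sfun_nonneg: "0 \<le> Sfun H V n z a"
  unfolding Sfun_eq[of H, OF Hnn] by (intro divide_nonneg_nonneg sum_nonneg) auto

lemma alpha1t_in: "alpha1t H V n G \<alpha> z \<in> {a\<in>G. \<alpha> \<le> Sfun H V n z a}"
  unfolding alpha1t_def using G Sfun_1[of z] al by (intro Min_in) auto

lemma alpha2t_in: "alpha2t H V n G \<alpha> z \<in> {a\<in>G. Sfun H V n z a < \<alpha>}"
  unfolding alpha2t_def using G Sfun_0[of z] al by (intro Max_in) auto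

lemma alpha1_ge: "\<alpha> \<le> alpha1 H V n G \<alpha> z"
  using alpha1t_in[of z] unfolding alpha1_def by simp

lemma alpha2_less: "alpha2 H V n G \<alpha> z < \<alpha>"
  using alpha2t_in[of z] unfolding alpha2_def by simp

lemma alpha1t_eq: "alpha1t H V n G \<alpha> z = Min ((\<lambda>a. if \<alpha> \<le> Sfun H V n z a then a else 2) ` G)"
proof (rule antisym)
  let ?g = "\<lambda>a. if \<alpha> \<le> Sfun H V n z a then a else (2::real)"
  have fin: "finite (?g ` G)" "?g ` G \<noteq> {}" using G by auto
  show "alpha1t H V n G \<alpha> z \<le> Min (?g ` G)"
  proof (subst Min_ge_iff[OF fin], safe)
    fix a assume a: "a \<in> G"
    show "alpha1t H V n G \<alpha> z \<le> ?g a"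
    proof (cases "\<alpha> \<le> Sfun H V n z a")
      case True thus ?thesis unfolding alpha1t_def using a G by (simp add: Min_le)
    next
      case False thus ?thesis using alpha1t_in[of z] G by auto
    qed
  qed
  show "Min (?g ` G) \<le> alpha1t H V n G \<alpha> z"
    using alpha1t_in[of z] fin by (intro Min_le_iff[OF fin, THEN iffD2]) force
qed

lemma alpha2t_eq: "alpha2t H V n G \<alpha> z = Max ((\<lambda>a. if Sfun H V n z a < \<alpha> then a else -1) ` G)"
proof (rule antisym)
  let ?g = "\<lambda>a. if Sfun H V n z a < \<alpha> then a else (-1::real)"
  have fin: "finite (?g ` G)" "?g ` G \<noteq> {}" using G by auto
  show "Max (?g ` G) \<le> alpha2t H V n G \<alpha> z"
  proof (subst Max_le_iff[OF fin], safe)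
    fix a assume a: "a \<in> G"
    show "?g a \<le> alpha2t H V n G \<alpha> z"
    proof (cases "Sfun H V n z a < \<alpha>")
      case True thus ?thesis unfolding alpha2t_def using a G by (simp add: Max_ge)
    next
      case False thus ?thesis using alpha2t_in[of z] G by auto
    qed
  qed
  show "alpha2t H V n G \<alpha> z \<le> Max (?g ` G)"
    using alpha2t_in[of z] fin by (intro Max_ge_iff[OF fin, THEN iffD2]) force
qed

lemma Sfun_meas:
  assumes TM: "\<And>i. i \<in> {1..n+1} \<Longrightarrow> (\<lambda>k. Tf H V n (zf k) i) \<in> borel_measurable K"
    and b: "b \<in> borel_measurable K"
  shows "(\<lambda>k. Sfun H V n (zf k) (b k)) \<in> borel_measurable K"
  unfolding Sfun_eq[of H, OF Hnn]
  using TM b by (intro borel_measurable_divide borel_measurable_sum measurable_If borel_measurable_less) auto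

lemma alpha1t_meas:
  assumes TM: "\<And>i. i \<in> {1..n+1} \<Longrightarrow> (\<lambda>k. Tf H V n (zf k) i) \<in> borel_measurable K"
  shows "(\<lambda>k. alpha1t H V n G \<alpha> (zf k)) \<in> borel_measurable K"
  unfolding alpha1t_eq
  using G(1) Sfun_meas[OF TM] by (intro borel_measurable_Min measurable_If borel_measurable_le) auto

lemma alpha2t_meas:
  assumes TM: "\<And>i. i \<in> {1..n+1} \<Longrightarrow> (\<lambda>k. Tf H V n (zf k) i) \<in> borel_measurable K"
  shows "(\<lambda>k. alpha2t H V n G \<alpha> (zf k)) \<in> borel_measurable K"
  unfolding alpha2t_eq
  using G(1) Sfun_meas[OF TM] by (intro borel_measurable_Max measurable_If borel_measurable_less) auto

lemma alphat_meas:
  assumes TM: "\<And>i. i \<in> {1..n+1} \<Longrightarrow> (\<lambda>k. Tf H V n (zf k) i) \<in> borel_measurable K"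
    and u: "uf \<in> borel_measurable K"
  shows "(\<lambda>k. alphat H V n G \<alpha> (zf k) (uf k)) \<in> borel_measurable K"
proof -
  note m1 = alpha1t_meas[OF TM] and m2 = alpha2t_meas[OF TM]
  have a1: "(\<lambda>k. alpha1 H V n G \<alpha> (zf k)) \<in> borel_measurable K"
    unfolding alpha1_def by (rule Sfun_meas[OF TM m1])
  have a2: "(\<lambda>k. alpha2 H V n G \<alpha> (zf k)) \<in> borel_measurable K"
    unfolding alpha2_def by (rule Sfun_meas[OF TM m2])
  show ?thesis unfolding alphat_def
    using m1 m2 a1 a2 u by (intro measurable_If borel_measurable_less borel_measurable_divide borel_measurable_diff) auto
qed

lemma alphat_cong: "Sfun H V n z = Sfun H V n z' \<Longrightarrow> alphat H V n G \<alpha> z u = alphat H V n G \<alpha> z' u"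
  unfolding alphat_def alpha1_def alpha2_def alpha1t_def alpha2t_def by simp

lemma W_prob: "prob_space (uniform_measure lborel {0..1::real})"
  by (intro prob_space_uniform_measure) auto

lemma inner_u:
  "(\<integral>\<^sup>+u. ennreal (Sfun H V n z (alphat H V n G \<alpha> z u)) \<partial>uniform_measure lborel {0..1}) = ennreal \<alpha>"
proof -
  define a1 where "a1 = alpha1 H V n G \<alpha> z"
  define a2 where "a2 = alpha2 H V n G \<alpha> z"
  define p where "p = (\<alpha> - a2) / (a1 - a2)"
  have h1: "\<alpha> \<le> a1" "a2 < \<alpha>" "0 \<le> a2"
    using alpha1_ge[of z] alpha2_less[of z] Sfun_nonneg unfolding a1_def a2_def alpha2_def by auto
  have p: "0 < p" "p \<le> 1" unfolding p_def using h1 by (auto simp: field_simps)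
  have peq: "a2 + (a1 - a2) * p = \<alpha>" unfolding p_def using h1 by (auto simp: field_simps)
  have eqS: "Sfun H V n z (alphat H V n G \<alpha> z u) = (if u < p then a1 else a2)" for u
    unfolding alphat_def a1_def a2_def p_def alpha1_def alpha2_def by auto
  interpret W: prob_space "uniform_measure lborel {0..1::real}" by (rule W_prob)
  have "(\<integral>\<^sup>+u. ennreal (Sfun H V n z (alphat H V n G \<alpha> z u)) \<partial>uniform_measure lborel {0..1})
     = (\<integral>\<^sup>+u. ennreal a2 + ennreal (a1 - a2) * indicator {..<p} u \<partial>uniform_measure lborel {0..1})"
    using h1 by (intro nn_integral_cong) (auto simp: eqS indicator_def ennreal_plus[symmetric] simp del: ennreal_plus)
  also have "\<dots> = ennreal a2 * emeasure (uniform_measure lborel {0..1::real}) (space (uniform_measure lborel {0..1::real}))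
      + ennreal (a1 - a2) * emeasure (uniform_measure lborel {0..1::real}) {..<p}"
    by (subst nn_integral_add) (auto simp: nn_integral_cmult_indicator)
  also have "emeasure (uniform_measure lborel {0..1::real}) {..<p} = ennreal p"
  proof -
    have "{0..1} \<inter> {..<p} = {0..<p}" using p by auto
    thus ?thesis using p by (simp add: emeasure_lborel_Ico divide_ennreal_def)
  qed
  also have "ennreal a2 * emeasure (uniform_measure lborel {0..1::real}) (space (uniform_measure lborel {0..1::real}))
      + ennreal (a1 - a2) * ennreal p = ennreal (a2 + (a1 - a2) * p)"
    using h1 p by (simp add: W.emeasure_space_1 ennreal_mult[symmetric] ennreal_plus[symmetric] del: ennreal_plus)
  finally show ?thesis using peq by simp
qed

end

lemma Tf_meas:
  assumes "\<And>i j. i \<in> {1..n+1} \<Longrightarrow> j \<in> {1..n+1} \<Longrightarrow> (\<lambda>z. Hm H n z i j) \<in> borel_measurable K"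
    and "\<And>i. i \<in> {1..n+1} \<Longrightarrow> (\<lambda>z. Vs V n z i) \<in> borel_measurable K" and "i \<in> {1..n+1}"
  shows "(\<lambda>z. Tf H V n z i) \<in> borel_measurable K"
  unfolding Tf_def pH_def
  using assms by (intro borel_measurable_divide borel_measurable_sum measurable_If borel_measurable_less measurable_const) auto

theorem theorem4:
  fixes M :: "'w measure"
    and P :: "((real ^ 'p) \<times> real) measure"
    and Z :: "nat \<Rightarrow> 'w \<Rightarrow> (real ^ 'p) \<times> real"
    and U :: "'w \<Rightarrow> real"
    and H :: "real ^ 'p \<Rightarrow> real ^ 'p \<Rightarrow> (real ^ 'p) multiset \<Rightarrow> real"
    and V :: "(real ^ 'p) \<times> real \<Rightarrow> ((real ^ 'p) \<times> real) multiset \<Rightarrow> real"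
    and n :: nat and G :: "real set" and \<alpha> :: real
  assumes M: "prob_space M"
    and Z_meas: "\<And>i. i \<in> {1..n+1} \<Longrightarrow> Z i \<in> measurable M borel"
    and P: "prob_space P" "sets P = sets borel"
    and U_meas: "U \<in> borel_measurable M"
    and joint_law: "distr M (PiM {1..n+1} (\<lambda>_. borel) \<Otimes>\<^sub>M lborel)
          (\<lambda>w. (\<lambda>i\<in>{1..n+1}. Z i w, U w))
        = PiM {1..n+1} (\<lambda>_. P) \<Otimes>\<^sub>M uniform_measure lborel {0..1}"
    and H_range: "\<And>x y X. 0 \<le> H x y X \<and> H x y X \<le> 1"
    and H_diag: "\<And>x X. H x x X = 1"
    and H_meas: "\<And>i j. i \<in> {1..n+1} \<Longrightarrow> j \<in> {1..n+1} \<Longrightarrow>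
        (\<lambda>z. Hm H n z i j) \<in> borel_measurable (PiM {1..n+1} (\<lambda>_. borel))"
    and V_nonneg: "\<And>z Zs. 0 \<le> V z Zs"
    and V_meas: "\<And>i. i \<in> {1..n+1} \<Longrightarrow>
        (\<lambda>z. Vs V n z i) \<in> borel_measurable (PiM {1..n+1} (\<lambda>_. borel))"
    and alpha: "0 < \<alpha>" "\<alpha> < 1"
    and G: "finite G" "G \<subseteq> {0..1}" "0 \<in> G" "1 \<in> G"
  shows "prob_space.prob M
     {w \<in> space M. ereal (Vs V n (\<lambda>i. Z i w) (n+1))
         \<le> QF H V n (\<lambda>i. Z i w) (alphat H V n G \<alpha> (\<lambda>i. Z i w) (U w))} = \<alpha>"
proof -
  have Hnn: "\<And>x y X. 0 \<le> H x y X" using H_range by blast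
  define B where "B = PiM {1..n+1} (\<lambda>_. borel :: ((real^'p)\<times>real) measure)"
  define N where "N = PiM {1..n+1} (\<lambda>_. P)"
  define W where "W = uniform_measure lborel {0..1::real}"
  interpret M: prob_space M by (rule M)
  interpret W: prob_space W unfolding W_def by (rule prob_space_uniform_measure) auto
  interpret N: prob_space N unfolding N_def by (rule prob_space_PiM) (rule P(1))
  interpret NW: pair_sigma_finite N W
    by (simp add: pair_sigma_finite_def N.sigma_finite_measure_axioms W.sigma_finite_measure_axioms)
  have sN: "sets N = sets B" unfolding N_def B_def by (rule sets_PiM_cong) (auto simp: P(2))
  have spN: "space N = space B" by (rule sets_eq_imp_space_eq[OF sN])
  have sNW: "sets (N \<Otimes>\<^sub>M W) = sets (B \<Otimes>\<^sub>M lborel)"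
    by (rule sets_pair_measure_cong) (auto simp: sN W_def)
  have TMB: "(\<lambda>z. Tf H V n z i) \<in> borel_measurable B" if "i \<in> {1..n+1}" for i
    unfolding B_def using H_meas V_meas that by (intro Tf_meas) auto
  have TMN: "(\<lambda>z. Tf H V n z i) \<in> borel_measurable N" if "i \<in> {1..n+1}" for i
    by (subst measurable_cong_sets[OF sN refl]) (rule TMB[OF that])
  have TMpair: "(\<lambda>x. Tf H V n (fst x) i) \<in> borel_measurable (B \<Otimes>\<^sub>M lborel)" if "i \<in> {1..n+1}" for i
    by (rule measurable_compose[OF measurable_fst TMB[OF that]])
  have alpha_pair: "(\<lambda>x. alphat H V n G \<alpha> (fst x) (snd x)) \<in> borel_measurable (B \<Otimes>\<^sub>M lborel)"
    by (rule alphat_meas[OF Hnn H_diag alpha G TMpair]) auto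
  define E where "E = {x \<in> space (B \<Otimes>\<^sub>M lborel). Tf H V n (fst x) (n+1) < alphat H V n G \<alpha> (fst x) (snd x)}"
  have E_sets: "E \<in> sets (B \<Otimes>\<^sub>M lborel)" unfolding E_def
    using TMpair alpha_pair by (intro borel_measurable_less) auto
  define f where "f = (\<lambda>w. (\<lambda>i\<in>{1..n+1}. Z i w, U w))"
  have f_meas: "f \<in> measurable M (B \<Otimes>\<^sub>M lborel)" unfolding f_def B_def
    using Z_meas U_meas by (intro measurable_Pair measurable_restrict) auto
  have Tf_restr: "Tf H V n (restrict z {1..n+1}) i = Tf H V n z i" if "i \<in> {1..n+1}" for z i
    using that by (intro Tf_cong) auto
  have alphat_restr: "alphat H V n G \<alpha> (restrict z {1..n+1}) u = alphat H V n G \<alpha> z u" for z u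
    by (intro alphat_cong[OF Hnn H_diag alpha G] Sfun_cong[OF Hnn]) auto
  have set_eq: "{w \<in> space M. ereal (Vs V n (\<lambda>i. Z i w) (n+1))
         \<le> QF H V n (\<lambda>i. Z i w) (alphat H V n G \<alpha> (\<lambda>i. Z i w) (U w))} = f -` E \<inter> space M"
  proof -
    have key: "w \<in> f -` E \<longleftrightarrow> Tf H V n (\<lambda>i. Z i w) (n+1) < alphat H V n G \<alpha> (\<lambda>i. Z i w) (U w)"
      if w: "w \<in> space M" for w
    proof -
      have sp: "f w \<in> space (B \<Otimes>\<^sub>M lborel)" using measurable_space[OF f_meas w] .
      have t: "Tf H V n (restrict (\<lambda>i. Z i w) {1..n+1}) (n+1) = Tf H V n (\<lambda>i. Z i w) (n+1)"
        by (rule Tf_restr) simp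
      have a: "alphat H V n G \<alpha> (restrict (\<lambda>i. Z i w) {1..n+1}) (U w) = alphat H V n G \<alpha> (\<lambda>i. Z i w) (U w)"
        by (rule alphat_restr)
      have "w \<in> f -` E \<longleftrightarrow> Tf H V n (restrict (\<lambda>i. Z i w) {1..n+1}) (n+1) < alphat H V n G \<alpha> (restrict (\<lambda>i. Z i w) {1..n+1}) (U w)"
        using sp unfolding E_def f_def by simp
      thus ?thesis unfolding t a .
    qed
    show ?thesis unfolding QF_char[of H, OF Hnn] using key by blast
  qed
  have "prob_space.prob M {w \<in> space M. ereal (Vs V n (\<lambda>i. Z i w) (n+1))
         \<le> QF H V n (\<lambda>i. Z i w) (alphat H V n G \<alpha> (\<lambda>i. Z i w) (U w))}
      = measure (distr M (B \<Otimes>\<^sub>M lborel) f) E"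
    unfolding set_eq by (rule measure_distr[OF f_meas E_sets, symmetric])
  also have "distr M (B \<Otimes>\<^sub>M lborel) f = N \<Otimes>\<^sub>M W"
    using joint_law unfolding f_def B_def N_def W_def .
  finally have step1: "prob_space.prob M {w \<in> space M. ereal (Vs V n (\<lambda>i. Z i w) (n+1))
         \<le> QF H V n (\<lambda>i. Z i w) (alphat H V n G \<alpha> (\<lambda>i. Z i w) (U w))} = measure (N \<Otimes>\<^sub>M W) E" .
  have E_sets': "E \<in> sets (N \<Otimes>\<^sub>M W)" using E_sets sNW by simp
  have g_meas: "(\<lambda>x. ennreal (Sfun H V n (fst x) (alphat H V n G \<alpha> (fst x) (snd x)))) \<in> borel_measurable (N \<Otimes>\<^sub>M W)"
  proof -
    have "(\<lambda>x. Sfun H V n (fst x) (alphat H V n G \<alpha> (fst x) (snd x))) \<in> borel_measurable (B \<Otimes>\<^sub>M lborel)"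
      by (rule Sfun_meas[OF Hnn H_diag alpha G TMpair alpha_pair])
    hence "(\<lambda>x. ennreal (Sfun H V n (fst x) (alphat H V n G \<alpha> (fst x) (snd x)))) \<in> borel_measurable (B \<Otimes>\<^sub>M lborel)"
      by (rule measurable_compose[OF _ measurable_ennreal])
    thus ?thesis by (subst measurable_cong_sets[OF sNW refl])
  qed
  have claimC: "(\<integral>\<^sup>+z. indicator E (z, u) \<partial>N) = (\<integral>\<^sup>+z. ennreal (Sfun H V n z (alphat H V n G \<alpha> z u)) \<partial>N)" for u
  proof -
    define h where "h = (\<lambda>i z. if Tf H V n z i < alphat H V n G \<alpha> z u then 1 else (0::ennreal))"
    have aN: "(\<lambda>z. alphat H V n G \<alpha> z u) \<in> borel_measurable N"
      by (rule alphat_meas[OF Hnn H_diag alpha G TMN]) auto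
    have hm: "h i \<in> borel_measurable N" if "i \<in> {1..n+1}" for i
      unfolding h_def using TMN[OF that] aN by (intro measurable_If borel_measurable_less) auto
    have "(\<integral>\<^sup>+z. indicator E (z, u) \<partial>N) = (\<integral>\<^sup>+z. h (n+1) z \<partial>N)"
      by (intro nn_integral_cong) (auto simp: E_def h_def space_pair_measure spN indicator_def)
    also have swap: "(\<integral>\<^sup>+z. h (n+1) z \<partial>N) = (\<integral>\<^sup>+z. h i z \<partial>N)" if i: "i \<in> {1..n+1}" for i
    proof -
      define \<sigma> where "\<sigma> = (\<lambda>j. if j = i then n+1 else if j = n+1 then i else j)"
      have b: "bij_betw \<sigma> {1..n+1} {1..n+1}"
        by (rule bij_betwI[where g=\<sigma>]) (use i in \<open>auto simp: \<sigma>_def\<close>)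
      define r where "r = (\<lambda>\<omega>::nat \<Rightarrow> (real^'p)\<times>real. \<lambda>j\<in>{1..n+1}. \<omega> (\<sigma> j))"
      have dr: "distr N N r = N" unfolding N_def r_def
        using distr_PiM_reindex[of "{1..n+1}" "\<lambda>_. P" \<sigma> "{1..n+1}"] b P(1)
        by (auto simp: bij_betw_def)
      have rm: "r \<in> measurable N N" unfolding r_def N_def
        using b by (intro measurable_restrict measurable_component_singleton) (auto simp: bij_betw_def)
      have "(\<integral>\<^sup>+z. h (n+1) z \<partial>N) = (\<integral>\<^sup>+z. h (n+1) z \<partial>distr N N r)" by (simp add: dr)
      also have "\<dots> = (\<integral>\<^sup>+z. h (n+1) (r z) \<partial>N)"
        using nn_integral_distr[OF rm, of "h (n+1)"] hm[of "n+1"] dr by simp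
      also have "\<dots> = (\<integral>\<^sup>+z. h i z \<partial>N)"
      proof (intro nn_integral_cong)
        fix z
        have "Tf H V n (r z) (n+1) = Tf H V n (\<lambda>j. z (\<sigma> j)) (n+1)"
          unfolding r_def by (intro Tf_cong) auto
        also have "\<dots> = Tf H V n z i" using Tf_perm[OF b, where i="n+1" and H=H and V=V and z=z] by (simp add: \<sigma>_def del: One_nat_def)
        finally have t: "Tf H V n (r z) (n+1) = Tf H V n z i" .
        have "Sfun H V n (r z) = Sfun H V n (\<lambda>j. z (\<sigma> j))"
          unfolding r_def by (intro Sfun_cong[OF Hnn]) auto
        also have "\<dots> = Sfun H V n z" by (rule Sfun_perm[OF Hnn b])
        finally have "alphat H V n G \<alpha> (r z) u = alphat H V n G \<alpha> z u" by (rule alphat_cong[OF Hnn H_diag alpha G])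
        thus "h (n+1) (r z) = h i z" unfolding h_def using t by simp
      qed
      finally show ?thesis .
    qed
    finally have e1: "(\<integral>\<^sup>+z. indicator E (z, u) \<partial>N) = (\<integral>\<^sup>+z. h (n+1) z \<partial>N)" by simp
    have "of_nat (n+1) * (\<integral>\<^sup>+z. h (n+1) z \<partial>N) = (\<Sum>i\<in>{1..n+1}. \<integral>\<^sup>+z. h (n+1) z \<partial>N)"
      by simp
    also have "\<dots> = (\<Sum>i\<in>{1..n+1}. \<integral>\<^sup>+z. h i z \<partial>N)"
      using swap by (intro sum.cong) auto
    also have "\<dots> = (\<integral>\<^sup>+z. (\<Sum>i\<in>{1..n+1}. h i z) \<partial>N)"
      using hm by (intro nn_integral_sum[symmetric]) auto
    also have "\<dots> = (\<integral>\<^sup>+z. of_nat (n+1) * ennreal (Sfun H V n z (alphat H V n G \<alpha> z u)) \<partial>N)"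
    proof (intro nn_integral_cong)
      fix z
      have "(\<Sum>i\<in>{1..n+1}. h i z) = (\<Sum>i\<in>{1..n+1}. ennreal (if Tf H V n z i < alphat H V n G \<alpha> z u then 1 else 0))"
        unfolding h_def by (intro sum.cong) auto
      also have "\<dots> = ennreal (\<Sum>i\<in>{1..n+1}. if Tf H V n z i < alphat H V n G \<alpha> z u then 1 else 0)"
        by (intro sum_ennreal) auto
      also have "(\<Sum>i\<in>{1..n+1}. if Tf H V n z i < alphat H V n G \<alpha> z u then 1 else (0::real))
          = real (n+1) * Sfun H V n z (alphat H V n G \<alpha> z u)"
        unfolding Sfun_eq[of H, OF Hnn] by simp
      also have "ennreal (real (n+1) * Sfun H V n z (alphat H V n G \<alpha> z u))
          = of_nat (n+1) * ennreal (Sfun H V n z (alphat H V n G \<alpha> z u))"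
        by (subst ennreal_mult') (simp_all add: ennreal_of_nat_eq_real_of_nat del: of_nat_Suc)
      finally show "(\<Sum>i\<in>{1..n+1}. h i z) = of_nat (n+1) * ennreal (Sfun H V n z (alphat H V n G \<alpha> z u))" .
    qed
    also have "\<dots> = of_nat (n+1) * (\<integral>\<^sup>+z. ennreal (Sfun H V n z (alphat H V n G \<alpha> z u)) \<partial>N)"
      by (rule nn_integral_cmult, rule measurable_compose[OF Sfun_meas[OF Hnn H_diag alpha G TMN aN] measurable_ennreal])
    finally have "of_nat (n+1) * (\<integral>\<^sup>+z. h (n+1) z \<partial>N)
        = of_nat (n+1) * (\<integral>\<^sup>+z. ennreal (Sfun H V n z (alphat H V n G \<alpha> z u)) \<partial>N)" .
    hence "(\<integral>\<^sup>+z. h (n+1) z \<partial>N) = (\<integral>\<^sup>+z. ennreal (Sfun H V n z (alphat H V n G \<alpha> z u)) \<partial>N)"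
      by (simp add: ennreal_mult_cancel_left ennreal_of_nat_eq_real_of_nat del: of_nat_Suc)
    thus ?thesis using e1 by simp
  qed
  have "emeasure (N \<Otimes>\<^sub>M W) E = (\<integral>\<^sup>+x. indicator E x \<partial>(N \<Otimes>\<^sub>M W))"
    by (rule nn_integral_indicator[OF E_sets', symmetric])
  also have "\<dots> = (\<integral>\<^sup>+u. (\<integral>\<^sup>+z. indicator E (z, u) \<partial>N) \<partial>W)"
    by (rule NW.nn_integral_snd[symmetric]) (use E_sets' in simp)
  also have "\<dots> = (\<integral>\<^sup>+u. (\<integral>\<^sup>+z. ennreal (Sfun H V n (fst (z, u)) (alphat H V n G \<alpha> (fst (z, u)) (snd (z, u)))) \<partial>N) \<partial>W)"
    using claimC by simp
  also have "\<dots> = (\<integral>\<^sup>+z. (\<integral>\<^sup>+u. ennreal (Sfun H V n (fst (z, u)) (alphat H V n G \<alpha> (fst (z, u)) (snd (z, u)))) \<partial>W) \<partial>N)"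
    by (rule NW.Fubini[OF g_meas])
  also have "\<dots> = (\<integral>\<^sup>+z. ennreal \<alpha> \<partial>N)"
    using inner_u[where H=H and V=V and n=n and G=G and \<alpha>=\<alpha>, OF Hnn H_diag alpha G] unfolding W_def by simp
  also have "\<dots> = ennreal \<alpha>" by (simp add: N.emeasure_space_1)
  finally have "emeasure (N \<Otimes>\<^sub>M W) E = ennreal \<alpha>" .
  hence "measure (N \<Otimes>\<^sub>M W) E = \<alpha>" using alpha by (simp add: measure_def)
  thus ?thesis using step1 by simp
qed

end
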